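(* Let $V$ be a finite dimensional $\mathbb{Q}$-vector space, $C\subset V$ a full dimensional convex polyhedral cone, $\Gamma\subset V$ a full rank lattice, and $\Delta:C\to\mathcal{P}_n(\mathbb{Q})$ a linear family of polytopes. Let $\kappa\in\Gamma$ be such that $\Delta(\kappa)$ is an anticanonical polytope for $(\Delta,\Gamma)$, and assume $\kappa\in C^\circ$. Then $\Delta(\kappa)$ contains exactly one lattice point of $\mathbb{Z}^n$ in its (relative) interior.
   Context: $\mathcal{P}_n(\mathbb{Q})$ is the set of convex polytopes in $\mathbb{R}^n$ with rational vertices. A linear family is a map $\Delta:C\to\mathcal{P}_n(\mathbb{Q})$ with $\Delta(c_1\lambda_1+c_2\lambda_2)=c_1\Delta(\lambda_1)+c_2\Delta(\lambda_2)$ (Minkowski sum) for $\lambda_i\in C$, $c_i\in\mathbb{Q}_{\ge0}$; it extends linearly to $V$ with values in virtual polytopes. For a convex set $P$, $N(P)=|P\cap\mathbb{Z}^n|$, and $P^\circ$ denotes the relative interior. $\Delta(\kappa)$, $\kappa\in\Gamma$, is an anticanonical polytope for $(\Delta,\Gamma)$ if for all $\gamma\in C^\circ\cap\Gamma$ with $\gamma-\kappa\in C\cap\Gamma$ we have $N(\Delta(\gamma-\kappa))=N(\Delta^\circ(\gamma))$. *)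

theory Defs
  imports "HOL-Analysis.Analysis"
begin

text \<open>The finite dimensional Q-vector space V is modelled as the rational points
  of real^'m (any finite dimensional Q-vector space is isomorphic to some Q^m).\<close>
definition rat_vecs :: "(real^'m) set" where
  "rat_vecs = {x. \<forall>i. x $ i \<in> \<rat>}"

definition int_points :: "(real^'n) set" where
  "int_points = {x. \<forall>i. x $ i \<in> \<int>}"

definition N :: "(real^'n) set \<Rightarrow> nat" where
  "N P = card (P \<inter> int_points)"

definition rat_polytopes :: "(real^'n) set set" where
  "rat_polytopes = {convex hull S | S. finite S \<and> S \<noteq> {} \<and> S \<subseteq> rat_vecs}"

definition gen_cone :: "(real^'m) set \<Rightarrow> (real^'m) set" where
  "gen_cone G = {\<Sum>g\<in>G. a g *\<^sub>R g | a. \<forall>g\<in>G. 0 \<le> a g}"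

definition rat_cone :: "(real^'m) set \<Rightarrow> (real^'m) set" where
  "rat_cone G = rat_vecs \<inter> gen_cone G"

definition rat_cone_interior :: "(real^'m) set \<Rightarrow> (real^'m) set" where
  "rat_cone_interior G = rat_vecs \<inter> interior (gen_cone G)"

definition full_rank_lattice :: "(real^'m) set \<Rightarrow> bool" where
  "full_rank_lattice \<Gamma> \<longleftrightarrow> (\<exists>B. finite B \<and> B \<subseteq> rat_vecs \<and> independent B \<and> span B = UNIV \<and>
      \<Gamma> = {\<Sum>b\<in>B. of_int (k b) *\<^sub>R b | k. True})"

definition linear_family :: "(real^'m) set \<Rightarrow> (real^'m \<Rightarrow> (real^'n) set) \<Rightarrow> bool" where
  "linear_family C \<Delta> \<longleftrightarrow>
     (\<forall>l\<in>C. \<Delta> l \<in> rat_polytopes) \<and>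
     (\<forall>l1\<in>C. \<forall>l2\<in>C. \<forall>c1\<in>\<rat>. \<forall>c2\<in>\<rat>. 0 \<le> c1 \<longrightarrow> 0 \<le> c2 \<longrightarrow>
        \<Delta> (c1 *\<^sub>R l1 + c2 *\<^sub>R l2) = {c1 *\<^sub>R x + c2 *\<^sub>R y | x y. x \<in> \<Delta> l1 \<and> y \<in> \<Delta> l2})"

definition anticanonical ::
  "(real^'m) set \<Rightarrow> (real^'m) set \<Rightarrow> (real^'m) set \<Rightarrow> (real^'m \<Rightarrow> (real^'n) set) \<Rightarrow> real^'m \<Rightarrow> bool" where
  "anticanonical C Cint \<Gamma> \<Delta> \<kappa> \<longleftrightarrow> \<kappa> \<in> \<Gamma> \<and>
     (\<forall>\<gamma>\<in>Cint \<inter> \<Gamma>. \<gamma> - \<kappa> \<in> C \<inter> \<Gamma> \<longrightarrow> N (\<Delta> (\<gamma> - \<kappa>)) = N (rel_interior (\<Delta> \<gamma>)))"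

end

theory Submission
  imports Defs
begin

theorem proposition1p8:
  fixes G :: "(real^'m) set" and \<Gamma> :: "(real^'m) set"
    and \<Delta> :: "real^'m \<Rightarrow> (real^'n) set" and \<kappa> :: "real^'m"
  assumes "finite G" and "G \<subseteq> rat_vecs"
    and "interior (gen_cone G) \<noteq> {}"
    and "full_rank_lattice \<Gamma>"
    and "linear_family (rat_cone G) \<Delta>"
    and "anticanonical (rat_cone G) (rat_cone_interior G) \<Gamma> \<Delta> \<kappa>"
    and "\<kappa> \<in> rat_cone_interior G"
  shows "N (rel_interior (\<Delta> \<kappa>)) = 1"
proof -
  have kC: "\<kappa> \<in> rat_cone G"
    using assms(7) interior_subset unfolding rat_cone_interior_def rat_cone_def by blast
  have kG: "\<kappa> \<in> \<Gamma>" using assms(6) unfolding anticanonical_def by blast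
  have z0: "(0::real^'m) \<in> rat_cone G"
  proof -
    have "(0::real^'m) \<in> rat_vecs" unfolding rat_vecs_def by simp
    moreover have "(0::real^'m) \<in> gen_cone G" unfolding gen_cone_def
      by (rule CollectI, rule exI[where x="\<lambda>_. 0"]) simp
    ultimately show ?thesis unfolding rat_cone_def by blast
  qed
  have zG: "(0::real^'m) \<in> \<Gamma>"
  proof -
    obtain B where B: "\<Gamma> = {\<Sum>b\<in>B. of_int (k b) *\<^sub>R b | k. True}"
      using assms(4) unfolding full_rank_lattice_def by blast
    show ?thesis unfolding B
      by (rule CollectI, rule exI[where x="\<lambda>_. 0"]) simp
  qed
  have eq: "N (\<Delta> (\<kappa> - \<kappa>)) = N (rel_interior (\<Delta> \<kappa>))"
    proof -
    have "\<forall>\<gamma>\<in>rat_cone_interior G \<inter> \<Gamma>. \<gamma> - \<kappa> \<in> rat_cone G \<inter> \<Gamma> \<longrightarrow> N (\<Delta> (\<gamma> - \<kappa>)) = N (rel_interior (\<Delta> \<gamma>))"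
      using assms(6) unfolding anticanonical_def by blast
    moreover have k1: "\<kappa> \<in> rat_cone_interior G \<inter> \<Gamma>" using assms(7) kG by blast
    ultimately have "\<kappa> - \<kappa> \<in> rat_cone G \<inter> \<Gamma> \<longrightarrow> N (\<Delta> (\<kappa> - \<kappa>)) = N (rel_interior (\<Delta> \<kappa>))"
      by (rule bspec)
    moreover have "\<kappa> - \<kappa> \<in> rat_cone G \<inter> \<Gamma>" using z0 zG by simp
    ultimately show ?thesis by (rule mp)
  qed
  have ne: "\<Delta> \<kappa> \<noteq> {}"
  proof -
    have "\<Delta> \<kappa> \<in> rat_polytopes" using assms(5) kC unfolding linear_family_def by blast
    then obtain S where "\<Delta> \<kappa> = convex hull S" "S \<noteq> {}" unfolding rat_polytopes_def by blast
    thus ?thesis by simp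
  qed
  have "\<Delta> ((0::real) *\<^sub>R \<kappa> + (0::real) *\<^sub>R \<kappa>) = {(0::real) *\<^sub>R x + (0::real) *\<^sub>R y | x y. x \<in> \<Delta> \<kappa> \<and> y \<in> \<Delta> \<kappa>}"
  proof -
    have "\<forall>l1\<in>rat_cone G. \<forall>l2\<in>rat_cone G. \<forall>c1\<in>\<rat>. \<forall>c2\<in>\<rat>. 0 \<le> c1 \<longrightarrow> 0 \<le> c2 \<longrightarrow>
        \<Delta> (c1 *\<^sub>R l1 + c2 *\<^sub>R l2) = {c1 *\<^sub>R x + c2 *\<^sub>R y | x y. x \<in> \<Delta> l1 \<and> y \<in> \<Delta> l2}"
      using assms(5) unfolding linear_family_def by (rule conjunct2)
    from this[rule_format, OF kC kC Rats_0 Rats_0 order_refl order_refl] show ?thesis .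
  qed
  also have "\<dots> = {0}"
  proof -
    obtain x where "x \<in> \<Delta> \<kappa>" using ne by blast
    thus ?thesis by auto
  qed
  finally have D0: "\<Delta> (\<kappa> - \<kappa>) = {0}" by simp
  have "(0::real^'n) \<in> int_points" unfolding int_points_def by simp
  hence "N (\<Delta> (\<kappa> - \<kappa>)) = 1" unfolding D0 N_def by simp
  thus ?thesis using eq by simp
qed

end
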